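(* Let $P$ be a finite metabelian $p$-group of rank $r$, and let $t\ge1$. Assume that every abelian-by-cyclic subgroup of $P$ has an abelian subgroup of index at most $t$. Then $P$ has an abelian normal subgroup of index at most $t^{2r}$.
   Context: The rank of a finite group is the minimal $r$ such that every subgroup is $r$-generated. A group is metabelian if its commutator subgroup is abelian, and abelian-by-cyclic if it has an abelian normal subgroup with cyclic quotient. *)

theory Defs
  imports "HOL-Algebra.Algebra"
begin

definition sub_index :: "('a, 'b) monoid_scheme \<Rightarrow> 'a set \<Rightarrow> 'a set \<Rightarrow> nat" where
  "sub_index G H A = card (rcosets\<^bsub>G\<lparr>carrier := H\<rparr>\<^esub> A)"

definition abelian_subset :: "('a, 'b) monoid_scheme \<Rightarrow> 'a set \<Rightarrow> bool" where
  "abelian_subset G H \<longleftrightarrow> comm_group (G\<lparr>carrier := H\<rparr>)"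

definition group_rank :: "('a, 'b) monoid_scheme \<Rightarrow> nat" where
  "group_rank G = (LEAST r. \<forall>H. subgroup H G \<longrightarrow>
      (\<exists>S. S \<subseteq> H \<and> finite S \<and> card S \<le> r \<and> generate G S = H))"

definition metabelian :: "('a, 'b) monoid_scheme \<Rightarrow> bool" where
  "metabelian G \<longleftrightarrow> abelian_subset G (derived G (carrier G))"

definition p_group :: "('a, 'b) monoid_scheme \<Rightarrow> nat \<Rightarrow> bool" where
  "p_group G p \<longleftrightarrow> Factorial_Ring.prime p \<and> finite (carrier G) \<and> (\<exists>n. order G = p ^ n)"

definition abelian_by_cyclic :: "('a, 'b) monoid_scheme \<Rightarrow> 'a set \<Rightarrow> bool" where
  "abelian_by_cyclic G H \<longleftrightarrow> (\<exists>A. A \<lhd> G\<lparr>carrier := H\<rparr> \<and> abelian_subset G A \<and>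
      cyclic_group (G\<lparr>carrier := H\<rparr> Mod A))"

end

theory Submission imports Defs begin

context group begin

lemma inv_pow_nat:
  assumes fin: "finite (carrier G)" and x: "x \<in> carrier G"
  shows "inv (x [^] (i::nat)) = x [^] (i * (ord x - 1))"
proof -
  obtain k where k: "ord x = Suc k" using ord_ge_1[OF fin x] by (cases "ord x") auto
  have "x [^] (i * (ord x - 1)) \<otimes> x [^] i = x [^] (i * k + i)"
    using x k by (simp add: nat_pow_mult)
  also have "i * k + i = ord x * i" using k by simp
  also have "x [^] (ord x * i) = \<one>" using x by (simp add: nat_pow_pow[symmetric])
  finally show ?thesis using x by (intro inv_equality) auto
qed

lemma inv_cancel_l: "y \<in> carrier G \<Longrightarrow> z \<in> carrier G \<Longrightarrow> inv y \<otimes> (y \<otimes> z) = z"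
  by (simp add: m_assoc[symmetric])

lemma inv_cancel_l2: "y \<in> carrier G \<Longrightarrow> z \<in> carrier G \<Longrightarrow> y \<otimes> (inv y \<otimes> z) = z"
  by (simp add: m_assoc[symmetric])

definition Tset :: "'a set \<Rightarrow> 'a \<Rightarrow> 'a set" where
  "Tset N x = {n \<otimes> x [^] (i::nat) | n i. n \<in> N}"

lemma TsetI: "n \<in> N \<Longrightarrow> n \<otimes> x [^] (i::nat) \<in> Tset N x"
  unfolding Tset_def by blast

lemma TsetE:
  assumes "a \<in> Tset N x"
  obtains n i where "n \<in> N" "a = n \<otimes> x [^] (i::nat)"
  using assms unfolding Tset_def by blast

lemma T_subgroup:
  assumes fin: "finite (carrier G)" and N: "N \<lhd> G" and x: "x \<in> carrier G"
  shows "subgroup (Tset N x) G"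
proof -
  have sgN: "subgroup N G" using N by (rule normal_imp_subgroup)
  have sub: "N \<subseteq> carrier G" using sgN by (rule subgroup.subset)
  have conj: "\<And>g n. g \<in> carrier G \<Longrightarrow> n \<in> N \<Longrightarrow> g \<otimes> n \<otimes> inv g \<in> N"
    using N by (rule normal.inv_op_closed2)
  show ?thesis
  proof (rule subgroupI)
    show "Tset N x \<subseteq> carrier G"
    proof
      fix a assume "a \<in> Tset N x"
      then obtain n i where "n \<in> N" "a = n \<otimes> x [^] (i::nat)" by (rule TsetE)
      then show "a \<in> carrier G" using sub x by auto
    qed
    show "Tset N x \<noteq> {}"
      using TsetI[OF subgroup.one_closed[OF sgN]] by blast
  next
    fix a assume "a \<in> Tset N x"
    then obtain n i where a: "n \<in> N" "a = n \<otimes> x [^] (i::nat)" by (rule TsetE)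
    have nc: "n \<in> carrier G" using a sub by auto
    define y where "y = inv (x [^] i)"
    have yc: "y \<in> carrier G" using x y_def by simp
    define c where "c = y \<otimes> inv n \<otimes> inv y"
    have "inv a = y \<otimes> inv n" using a nc x y_def by (simp add: inv_mult_group)
    also have "\<dots> = c \<otimes> y"
      using nc yc c_def by (simp add: m_assoc)
    finally have eq0: "inv a = c \<otimes> y" .
    have "y = x [^] (i * (ord x - 1))" using inv_pow_nat[OF fin x] y_def by simp
    with eq0 have eq: "inv a = c \<otimes> x [^] (i * (ord x - 1))" by simp
    have "c \<in> N"
      using conj[OF yc] subgroup.m_inv_closed[OF sgN a(1)] c_def by blast
    from TsetI[OF this] show "inv a \<in> Tset N x" unfolding eq .
  next
    fix a b assume "a \<in> Tset N x" "b \<in> Tset N x"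
    then obtain n i m j where a: "n \<in> N" "a = n \<otimes> x [^] (i::nat)"
       and b: "m \<in> N" "b = m \<otimes> x [^] (j::nat)" by (metis TsetE)
    have nc: "n \<in> carrier G" "m \<in> carrier G" using a b sub by auto
    define y where "y = x [^] i"
    have yc: "y \<in> carrier G" using x y_def by simp
    have "a \<otimes> b = n \<otimes> (y \<otimes> m \<otimes> inv y) \<otimes> (y \<otimes> x [^] j)"
      using nc yc x a b y_def by (simp add: m_assoc inv_cancel_l)
    also have "y \<otimes> x [^] j = x [^] (i + j)" using x y_def by (simp add: nat_pow_mult)
    finally have eq: "a \<otimes> b = n \<otimes> (y \<otimes> m \<otimes> inv y) \<otimes> x [^] (i + j)" .
    have "n \<otimes> (y \<otimes> m \<otimes> inv y) \<in> N"
      using conj[OF yc b(1)] a(1) subgroup.m_closed[OF sgN] by blast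
    from TsetI[OF this] show "a \<otimes> b \<in> Tset N x" unfolding eq .
  qed
qed


definition commset :: "'a set \<Rightarrow> bool" where
  "commset A \<longleftrightarrow> (\<forall>a\<in>A. \<forall>b\<in>A. a \<otimes> b = b \<otimes> a)"

lemma abel_iff:
  assumes "subgroup A G"
  shows "abelian_subset G A \<longleftrightarrow> commset A"
proof
  assume "abelian_subset G A"
  then have "comm_group (G\<lparr>carrier := A\<rparr>)" unfolding abelian_subset_def .
  from comm_groupE(4)[OF this] show "commset A" unfolding commset_def by simp
next
  assume c: "commset A"
  have "group (G\<lparr>carrier := A\<rparr>)" using subgroup.subgroup_is_group[OF assms is_group] .
  then show "abelian_subset G A" unfolding abelian_subset_def
    by (rule group.group_comm_groupI) (use c in \<open>simp add: commset_def\<close>)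
qed

lemma comm_in_derived: "x \<in> carrier G \<Longrightarrow> hc \<in> carrier G \<Longrightarrow> x \<otimes> hc \<otimes> inv x \<otimes> inv hc \<in> derived G (carrier G)"
  unfolding derived_def
  apply (rule generate.incl)
  apply (rule UN_I[of x], assumption)
  apply (rule UN_I[of hc], assumption)
  by (rule singletonI)

lemma normal_der:
  assumes "subgroup A G" "derived G (carrier G) \<subseteq> A"
  shows "A \<lhd> G"
  unfolding normal_inv_iff
proof (intro conjI ballI assms(1))
  fix x h assume x: "x \<in> carrier G" and h: "h \<in> A"
  have hc: "h \<in> carrier G" using subgroup.mem_carrier[OF assms(1) h] .
  have "x \<otimes> h \<otimes> inv x \<otimes> inv h \<in> derived G (carrier G)"
    using x hc by (rule comm_in_derived)
  hence "x \<otimes> h \<otimes> inv x \<otimes> inv h \<in> A" by (rule subsetD[OF assms(2)])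
  hence "x \<otimes> h \<otimes> inv x \<otimes> inv h \<otimes> h \<in> A" using h by (rule subgroup.m_closed[OF assms(1)])
  moreover have "x \<otimes> h \<otimes> inv x = x \<otimes> h \<otimes> inv x \<otimes> inv h \<otimes> h"
    using x hc by (simp add: m_assoc)
  ultimately show "x \<otimes> h \<otimes> inv x \<in> A" by (simp only:)
qed

lemma pow_comm_elem:
  assumes "x \<in> carrier G" "a \<in> carrier G" "x \<otimes> a = a \<otimes> x"
  shows "x [^] (i::nat) \<otimes> a = a \<otimes> x [^] i"
proof (induction i)
  case 0 then show ?case using assms by simp
next
  case (Suc i)
  have "x [^] Suc i \<otimes> a = x [^] i \<otimes> (x \<otimes> a)" using assms by (simp add: m_assoc)
  also have "\<dots> = (x [^] i \<otimes> a) \<otimes> x" using assms by (simp add: m_assoc)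
  also have "\<dots> = a \<otimes> x [^] Suc i" using Suc assms by (simp add: m_assoc)
  finally show ?case .
qed

lemma T_comm:
  assumes "N \<subseteq> carrier G" "commset N" "x \<in> carrier G" "\<forall>a\<in>N. x \<otimes> a = a \<otimes> x"
  shows "commset (Tset N x)"
  unfolding commset_def
proof (intro ballI)
  fix u v assume "u \<in> Tset N x" "v \<in> Tset N x"
  then obtain n i m j where u: "n \<in> N" "u = n \<otimes> x [^] (i::nat)"
    and v: "m \<in> N" "v = m \<otimes> x [^] (j::nat)" by (metis TsetE)
  have c: "n \<in> carrier G" "m \<in> carrier G" using u v assms(1) by auto
  have nm: "n \<otimes> m = m \<otimes> n" using assms(2) u v unfolding commset_def by blast
  have xi: "x [^] i \<otimes> m = m \<otimes> x [^] i" using pow_comm_elem assms(3,4) v c by auto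
  have xj: "x [^] j \<otimes> n = n \<otimes> x [^] j" using pow_comm_elem assms(3,4) u c by auto
  have "u \<otimes> v = n \<otimes> (x [^] i \<otimes> m) \<otimes> x [^] j" using u v c assms(3) by (simp add: m_assoc)
  also have "\<dots> = (n \<otimes> m) \<otimes> (x [^] i \<otimes> x [^] j)" using xi c assms(3) by (simp add: m_assoc)
  also have "\<dots> = (m \<otimes> n) \<otimes> (x [^] j \<otimes> x [^] i)" using nm c assms(3)
    by (simp add: nat_pow_mult add.commute)
  also have "\<dots> = m \<otimes> (n \<otimes> x [^] j) \<otimes> x [^] i" using c assms(3) by (simp add: m_assoc)
  also have "\<dots> = m \<otimes> (x [^] j \<otimes> n) \<otimes> x [^] i" using xj by simp
  also have "\<dots> = v \<otimes> u" using u v c assms(3) by (simp add: m_assoc)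
  finally show "u \<otimes> v = v \<otimes> u" .
qed

lemma T_contains:
  assumes "subgroup N G" "x \<in> carrier G"
  shows "N \<subseteq> Tset N x" "x \<in> Tset N x"
proof -
  show "N \<subseteq> Tset N x"
  proof
    fix a assume a: "a \<in> N"
    hence "a = a \<otimes> x [^] (0::nat)" using assms subgroup.mem_carrier by fastforce
    thus "a \<in> Tset N x" using TsetI[OF a, of x 0] by simp
  qed
  have "x = \<one> \<otimes> x [^] (1::nat)" using assms by simp
  thus "x \<in> Tset N x" using TsetI[OF subgroup.one_closed[OF assms(1)], of x 1] by simp
qed


definition commutes :: "'a \<Rightarrow> 'a \<Rightarrow> bool" where
  "commutes u a \<longleftrightarrow> u \<otimes> a = a \<otimes> u"

lemma commutes_mult:
  assumes "u \<in> carrier G" "v \<in> carrier G" "a \<in> carrier G" "commutes u a" "commutes v a"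
  shows "commutes (u \<otimes> v) a"
proof -
  have "u \<otimes> v \<otimes> a = u \<otimes> (v \<otimes> a)" using assms by (simp add: m_assoc)
  also have "\<dots> = u \<otimes> (a \<otimes> v)" using assms(5) unfolding commutes_def by simp
  also have "\<dots> = (u \<otimes> a) \<otimes> v" using assms by (simp add: m_assoc)
  also have "\<dots> = (a \<otimes> u) \<otimes> v" using assms(4) unfolding commutes_def by simp
  also have "\<dots> = a \<otimes> (u \<otimes> v)" using assms by (simp add: m_assoc)
  finally show ?thesis unfolding commutes_def .
qed

lemma commutes_cancel:
  assumes "u \<in> carrier G" "v \<in> carrier G" "a \<in> carrier G" "commutes (u \<otimes> v) a" "commutes v a"
  shows "commutes u a"
proof -
  have "(u \<otimes> a) \<otimes> v = u \<otimes> (a \<otimes> v)" using assms by (simp add: m_assoc)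
  also have "\<dots> = u \<otimes> (v \<otimes> a)" using assms(5) unfolding commutes_def by simp
  also have "\<dots> = (u \<otimes> v) \<otimes> a" using assms by (simp add: m_assoc)
  also have "\<dots> = a \<otimes> (u \<otimes> v)" using assms(4) unfolding commutes_def by simp
  also have "\<dots> = (a \<otimes> u) \<otimes> v" using assms by (simp add: m_assoc)
  finally have "(u \<otimes> a) \<otimes> v = (a \<otimes> u) \<otimes> v" .
  then show ?thesis unfolding commutes_def using assms r_cancel by simp
qed

lemma commutes_pow_add:
  assumes "b \<in> carrier G" "a \<in> carrier G" "commutes (b [^] (i::nat)) a" "commutes (b [^] (j::nat)) a"
  shows "commutes (b [^] (i + j)) a"
  using commutes_mult[of "b [^] i" "b [^] j" a] assms by (simp add: nat_pow_mult)

lemma commutes_pow_sub: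
  assumes "b \<in> carrier G" "a \<in> carrier G" "commutes (b [^] (i::nat)) a" "commutes (b [^] (j::nat)) a" "i \<le> j"
  shows "commutes (b [^] (j - i)) a"
proof -
  have "b [^] j = b [^] (j - i) \<otimes> b [^] i" using assms by (simp add: nat_pow_mult)
  then show ?thesis using commutes_cancel[of "b [^] (j - i)" "b [^] i" a] assms by simp
qed

lemma commutes_pow_mult:
  assumes "b \<in> carrier G" "a \<in> carrier G" "commutes (b [^] (d::nat)) a"
  shows "commutes (b [^] (d * q)) a"
proof (induction q)
  case 0 then show ?case using assms by (simp add: commutes_def)
next
  case (Suc q)
  have "d * Suc q = d * q + d" by simp
  then show ?case using commutes_pow_add[OF assms(1,2) Suc assms(3)] by (simp only:)
qed

lemma commutes_least_dvd:
  assumes "b \<in> carrier G" "a \<in> carrier G" "commutes (b [^] (n::nat)) a"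
    and "d = (LEAST i. 0 < i \<and> commutes (b [^] i) a)" "0 < d" "commutes (b [^] d) a"
  shows "d dvd n"
proof -
  have m: "commutes (b [^] (d * (n div d))) a" using commutes_pow_mult assms by blast
  have le: "d * (n div d) \<le> n" by simp
  have "n - d * (n div d) = n mod d" by (simp add: minus_div_mult_eq_mod[symmetric] mult.commute)
  hence r: "commutes (b [^] (n mod d)) a" using commutes_pow_sub[OF assms(1,2) m assms(3) le] by simp
  have "n mod d < d" using assms(5) by simp
  hence "\<not> (0 < n mod d \<and> commutes (b [^] (n mod d)) a)"
    using not_less_Least[of "n mod d" "\<lambda>i. 0 < i \<and> commutes (b [^] i) a"] assms(4) by blast
  with r have "n mod d = 0" by simp
  then show ?thesis by (simp add: dvd_eq_mod_eq_0)
qed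

lemma conj_eq_commutes:
  assumes g: "g \<in> carrier G" and h: "h \<in> carrier G" and a: "a \<in> carrier G"
    and e: "inv g \<otimes> a \<otimes> g = inv h \<otimes> a \<otimes> h"
  shows "commutes (h \<otimes> inv g) a"
proof -
  have "h \<otimes> (inv g \<otimes> a \<otimes> g) \<otimes> inv g = h \<otimes> (inv h \<otimes> a \<otimes> h) \<otimes> inv g" using e by simp
  moreover have "h \<otimes> (inv g \<otimes> a \<otimes> g) \<otimes> inv g = (h \<otimes> inv g) \<otimes> a"
    using g h a by (simp add: m_assoc)
  moreover have "h \<otimes> (inv h \<otimes> a \<otimes> h) \<otimes> inv g = a \<otimes> (h \<otimes> inv g)"
    using g h a by (simp add: m_assoc inv_cancel_l2)
  ultimately show ?thesis unfolding commutes_def by simp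
qed


lemma prime_pow_dvd_le:
  fixes p :: nat
  assumes "Factorial_Ring.prime p" "x dvd p ^ e" "y dvd p ^ e" "x \<le> y" "0 < x"
  shows "x dvd y"
proof -
  obtain k1 where k1: "x = p ^ k1" using divides_primepow[OF assms(1,2)] by auto
  obtain k2 where k2: "y = p ^ k2" using divides_primepow[OF assms(1,3)] by auto
  have "1 < p" using assms(1) prime_gt_1_nat by blast
  hence "k1 \<le> k2" using assms(4) k1 k2 power_le_imp_le_exp by blast
  thus ?thesis using k1 k2 le_imp_power_dvd by blast
qed

lemma cent_bound:
  assumes fin: "finite (carrier G)" and pr: "Factorial_Ring.prime p" and ordG: "order G = p ^ e"
    and An: "A \<lhd> G" and Ac: "commset A" and b: "b \<in> carrier G"
    and Ms: "card ((\<lambda>a. inv a \<otimes> (inv b \<otimes> a \<otimes> b)) ` A) \<le> s"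
  shows "\<exists>J. 1 \<le> J \<and> J \<le> s \<and> (\<forall>a\<in>A. commutes (b [^] J) a)"
proof -
  define phi where "phi = (\<lambda>a. inv a \<otimes> (inv b \<otimes> a \<otimes> b))"
  define M where "M = phi ` A"
  have sgA: "subgroup A G" using An by (rule normal_imp_subgroup)
  have Asub: "A \<subseteq> carrier G" using sgA by (rule subgroup.subset)
  have finA: "finite A" using fin Asub finite_subset by blast
  have finM: "finite M" unfolding M_def using finA by simp
  have cl: "\<And>g a. g \<in> carrier G \<Longrightarrow> a \<in> A \<Longrightarrow> inv g \<otimes> a \<otimes> g \<in> A"
    using An by (rule normal.inv_op_closed1)
  have Acomm: "\<And>u v. u \<in> A \<Longrightarrow> v \<in> A \<Longrightarrow> u \<otimes> v = v \<otimes> u" using Ac unfolding commset_def by blast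
  have Ac1: "\<And>a. a \<in> A \<Longrightarrow> a \<in> carrier G" using Asub by blast
  have Ainv: "\<And>a. a \<in> A \<Longrightarrow> inv a \<in> A" using sgA by (rule subgroup.m_inv_closed)
  have Amul: "\<And>a c. a \<in> A \<Longrightarrow> c \<in> A \<Longrightarrow> a \<otimes> c \<in> A" using sgA by (rule subgroup.m_closed)
  have phiA: "\<And>a. a \<in> A \<Longrightarrow> phi a \<in> A"
    unfolding phi_def using Ainv cl[OF b] Amul by blast
  have phimult: "phi (a \<otimes> a') = phi a \<otimes> phi a'" if a: "a \<in> A" and a': "a' \<in> A" for a a'
  proof -
    define u where "u = inv b \<otimes> a \<otimes> b"
    define v where "v = inv b \<otimes> a' \<otimes> b"
    have uA: "u \<in> A" using cl[OF b a] u_def by simp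
    have vA: "v \<in> A" using cl[OF b a'] v_def by simp
    have ac: "a \<in> carrier G" "a' \<in> carrier G" "u \<in> carrier G" "v \<in> carrier G"
      using a a' uA vA Ac1 by auto
    have e1: "inv b \<otimes> (a \<otimes> a') \<otimes> b = u \<otimes> v"
      using ac b u_def v_def by (simp add: m_assoc inv_cancel_l2)
    have w: "inv a \<otimes> u \<in> A" using Amul[OF Ainv[OF a] uA] .
    have "phi (a \<otimes> a') = (inv a' \<otimes> inv a) \<otimes> (u \<otimes> v)"
      unfolding phi_def e1 using ac by (simp add: inv_mult_group)
    also have "\<dots> = inv a' \<otimes> (inv a \<otimes> u) \<otimes> v" using ac by (simp add: m_assoc)
    also have "inv a' \<otimes> (inv a \<otimes> u) = (inv a \<otimes> u) \<otimes> inv a'"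
      using Acomm[OF Ainv[OF a'] w] .
    also have "(inv a \<otimes> u) \<otimes> inv a' \<otimes> v = (inv a \<otimes> u) \<otimes> (inv a' \<otimes> v)"
      using ac by (simp add: m_assoc)
    also have "\<dots> = phi a \<otimes> phi a'" unfolding phi_def u_def v_def by simp
    finally show ?thesis .
  qed
  have Mmult: "x \<otimes> y \<in> M" if xy: "x \<in> M" "y \<in> M" for x y
  proof -
    obtain a a' where "a \<in> A" "a' \<in> A" "x = phi a" "y = phi a'" using xy unfolding M_def by blast
    then have "x \<otimes> y = phi (a \<otimes> a')" "a \<otimes> a' \<in> A" using phimult Amul by auto
    then show ?thesis unfolding M_def by blast
  qed
  have M1: "\<one> \<in> M"
  proof -
    have "phi \<one> = \<one>" unfolding phi_def using b by simp
    then show ?thesis unfolding M_def using subgroup.one_closed[OF sgA] by (metis image_eqI)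
  qed
  define cj where "cj = (\<lambda>(i::nat) a. inv (b [^] i) \<otimes> a \<otimes> b [^] i)"
  have cjA: "\<And>i a. a \<in> A \<Longrightarrow> cj i a \<in> A" unfolding cj_def using cl b by simp
  have cjM: "inv a \<otimes> cj i a \<in> M" if a: "a \<in> A" for a i
  proof (induction i)
    case 0
    have "inv a \<otimes> cj 0 a = \<one>" unfolding cj_def using a Ac1 by simp
    then show ?case using M1 by simp
  next
    case (Suc i)
    define c where "c = cj i a"
    have cA: "c \<in> A" using cjA a c_def by simp
    have cc: "c \<in> carrier G" using cA Ac1 by simp
    have ac: "a \<in> carrier G" using a Ac1 by simp
    have "cj (Suc i) a = inv b \<otimes> c \<otimes> b"
      unfolding c_def cj_def using b ac by (simp add: m_assoc inv_mult_group)
    also have "\<dots> = c \<otimes> phi c" unfolding phi_def using b cc by (simp add: m_assoc inv_cancel_l2)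
    finally have "inv a \<otimes> cj (Suc i) a = (inv a \<otimes> c) \<otimes> phi c"
      using ac cc b Ac1[OF phiA[OF cA]] by (simp add: m_assoc)
    moreover have "phi c \<in> M" unfolding M_def using cA by simp
    ultimately show ?case using Mmult Suc c_def by simp
  qed
  define od where "od = (\<lambda>a. LEAST i::nat. 0 < i \<and> commutes (b [^] i) a)"
  have od_props: "0 < od a \<and> commutes (b [^] od a) a \<and> od a dvd p ^ e \<and> od a \<le> s" if a: "a \<in> A" for a
  proof -
    have ac: "a \<in> carrier G" using a Ac1 by simp
    have ob: "1 \<le> ord b" using ord_ge_1[OF fin b] .
    have cob: "commutes (b [^] ord b) a" unfolding commutes_def using b ac by simp
    have ex: "\<exists>i::nat. 0 < i \<and> commutes (b [^] i) a" using ob cob by (intro exI[of _ "ord b"]) simp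
    have L: "0 < od a \<and> commutes (b [^] od a) a"
      unfolding od_def using LeastI_ex[OF ex] .
    have "od a dvd ord b"
      using commutes_least_dvd[OF b ac cob, of "od a"] L od_def by simp
    moreover have "ord b dvd order G" using ord_dvd_group_order[OF b] .
    ultimately have dv: "od a dvd p ^ e" using ordG dvd_trans by metis
    have inj: "inj_on (\<lambda>i. inv a \<otimes> cj i a) {..<od a}"
    proof (rule inj_onI)
      fix i j assume i: "i \<in> {..<od a}" and j: "j \<in> {..<od a}"
        and eq: "inv a \<otimes> cj i a = inv a \<otimes> cj j a"
      have eq2: "cj i a = cj j a" using eq l_cancel ac cjA[OF a] Ac1 by (metis inv_closed)
      have key: "cj i a = cj j a \<Longrightarrow> i < j \<Longrightarrow> j < od a \<Longrightarrow> False" for i j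
      proof -
        assume e: "cj i a = cj j a" and ij: "i < j" and jl: "j < od a"
        have "commutes (b [^] j \<otimes> inv (b [^] i)) a"
          using conj_eq_commutes[of "b [^] i" "b [^] j" a] e b ac unfolding cj_def by simp
        moreover have "b [^] j \<otimes> inv (b [^] i) = b [^] (j - i)"
        proof -
          have "b [^] j = b [^] (j - i) \<otimes> b [^] i" using b ij by (simp add: nat_pow_mult)
          then show ?thesis using b by (simp add: m_assoc)
        qed
        ultimately have "commutes (b [^] (j - i)) a" by simp
        moreover have "j - i < od a" using jl by simp
        ultimately show False
          using not_less_Least[of "j - i" "\<lambda>i::nat. 0 < i \<and> commutes (b [^] i) a"] ij od_def by auto
      qed
      show "i = j"
      proof (cases i j rule: linorder_cases)
        case less then show ?thesis using key[OF eq2] j by auto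
      next
        case greater then show ?thesis using key[OF eq2[symmetric]] i by auto
      qed simp
    qed
    have "(\<lambda>i. inv a \<otimes> cj i a) ` {..<od a} \<subseteq> M" using cjM[OF a] by blast
    from card_inj_on_le[OF inj this finM] have "od a \<le> card M" by simp
    also have "card M \<le> s" using Ms unfolding M_def phi_def .
    finally show ?thesis using L dv by blast
  qed
  have oneA: "\<one> \<in> A" using sgA by (rule subgroup.one_closed)
  define J where "J = Max (od ` A)"
  have JA: "J \<in> od ` A" unfolding J_def using finA oneA by (intro Max_in) auto
  then obtain a0 where a0: "a0 \<in> A" "J = od a0" by blast
  have J1: "1 \<le> J" "J \<le> s" using od_props[OF a0(1)] a0 by auto
  have "commutes (b [^] J) a" if a: "a \<in> A" for a
  proof -
    have le: "od a \<le> J" unfolding J_def using finA a by simp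
    have "od a dvd J"
      by (rule prime_pow_dvd_le[OF pr, of "od a" e J]) (use od_props[OF a] od_props[OF a0(1)] a0 le in auto)
    then obtain q where "J = od a * q" by blast
    then show ?thesis using commutes_pow_mult[OF b Ac1[OF a]] od_props[OF a] by simp
  qed
  then show ?thesis using J1 by blast
qed


lemma subgroup_pow_closed:
  assumes "subgroup H G" "x \<in> H"
  shows "x [^] (n::nat) \<in> H"
proof (induction n)
  case 0 then show ?case using subgroup.one_closed[OF assms(1)] by simp
next
  case (Suc n) then show ?case using subgroup.m_closed[OF assms(1)] assms(2) by simp
qed

lemma rcosets_restrict:
  "rcosets\<^bsub>G\<lparr>carrier := H\<rparr>\<^esub> B = (\<lambda>a. B #> a) ` H"
  by (auto simp: RCOSETS_def r_coset_def)

lemma inv_commute: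
  assumes "d \<in> carrier G" "b \<in> carrier G" "d \<otimes> b = b \<otimes> d"
  shows "inv b \<otimes> d = d \<otimes> inv b"
proof -
  have "inv b \<otimes> d = inv b \<otimes> (d \<otimes> b) \<otimes> inv b" using assms(1,2) by (simp add: m_assoc)
  also have "\<dots> = inv b \<otimes> (b \<otimes> d) \<otimes> inv b" using assms(3) by simp
  also have "\<dots> = d \<otimes> inv b" using assms(1,2) by (simp add: m_assoc inv_cancel_l)
  finally show ?thesis .
qed

lemma phi_shift:
  assumes "d \<in> carrier G" "b \<in> carrier G" "a \<in> carrier G" "d \<otimes> b = b \<otimes> d"
  shows "inv (d \<otimes> a) \<otimes> (inv b \<otimes> (d \<otimes> a) \<otimes> b) = inv a \<otimes> (inv b \<otimes> a \<otimes> b)"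
proof -
  have ib: "inv b \<otimes> d = d \<otimes> inv b" using inv_commute assms by blast
  have "inv b \<otimes> (d \<otimes> a) \<otimes> b = (inv b \<otimes> d) \<otimes> a \<otimes> b" using assms by (simp add: m_assoc)
  also have "\<dots> = d \<otimes> (inv b \<otimes> a \<otimes> b)" using assms ib by (simp add: m_assoc)
  finally have e: "inv b \<otimes> (d \<otimes> a) \<otimes> b = d \<otimes> (inv b \<otimes> a \<otimes> b)" .
  show ?thesis unfolding e using assms by (simp add: inv_mult_group m_assoc inv_cancel_l)
qed

lemma local_bound:
  assumes fin: "finite (carrier G)" and pr: "Factorial_Ring.prime p" and ordG: "order G = p ^ e"
    and An: "A \<lhd> G" and Ac: "commset A"
    and maxA: "\<And>y. y \<in> carrier G \<Longrightarrow> (\<forall>a\<in>A. commutes y a) \<Longrightarrow> y \<in> A"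
    and H: "subgroup H G" and AH: "A \<subseteq> H" and x: "x \<in> H"
    and B: "subgroup B G" and BH: "B \<subseteq> H" and Bc: "commset B"
  shows "\<exists>m. 1 \<le> m \<and> m \<le> (sub_index G H B) ^ 2 \<and> x [^] m \<in> A"
proof -
  define R where "R = (\<lambda>a. B #> a) ` H"
  have idx: "sub_index G H B = card R" unfolding sub_index_def R_def rcosets_restrict ..
  define n where "n = card R"
  have Hsub: "H \<subseteq> carrier G" using H by (rule subgroup.subset)
  have finH: "finite H" using fin Hsub finite_subset by blast
  have finR: "finite R" unfolding R_def using finH by simp
  have xc: "x \<in> carrier G" using x Hsub by blast
  have Bsub: "B \<subseteq> carrier G" using B by (rule subgroup.subset)
  \<comment> \<open>pigeonhole\<close>
  obtain k where k: "1 \<le> k" "k \<le> n" "x [^] k \<in> B"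
  proof -
    define f where "f = (\<lambda>i::nat. B #> x [^] i)"
    have fR: "f ` {..n} \<subseteq> R" unfolding f_def R_def using subgroup_pow_closed[OF H x] by blast
    have "\<not> inj_on f {..n}"
    proof
      assume "inj_on f {..n}"
      from card_inj_on_le[OF this fR finR] show False unfolding n_def by simp
    qed
    then obtain i j where ij: "i \<in> {..n}" "j \<in> {..n}" "i \<noteq> j" "f i = f j"
      unfolding inj_on_def by blast
    have gen: "x [^] (j - i) \<in> B" if "f i = f j" "i < j" for i j
    proof -
      have "x [^] j \<in> B #> x [^] i" using that(1) rcos_self[of "x [^] j" B] xc B unfolding f_def by simp
      hence "x [^] j \<otimes> inv (x [^] i) \<in> B"
        using subgroup.rcos_module_imp[OF B is_group] xc by simp
      moreover have "x [^] j = x [^] (j - i) \<otimes> x [^] i" using xc that(2) by (simp add: nat_pow_mult)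
      ultimately show ?thesis using xc by (simp add: m_assoc)
    qed
    show ?thesis
    proof (cases "i < j")
      case True then show ?thesis using that[of "j - i"] gen[OF ij(4) True] ij by auto
    next
      case False then have "j < i" using ij(3) by simp
      then show ?thesis using that[of "i - j"] gen[OF ij(4)[symmetric]] ij by auto
    qed
  qed
  define b where "b = x [^] k"
  have bB: "b \<in> B" using k b_def by simp
  have bc: "b \<in> carrier G" using b_def xc by simp
  define phi where "phi = (\<lambda>a. inv a \<otimes> (inv b \<otimes> a \<otimes> b))"
  have sgA: "subgroup A G" using An by (rule normal_imp_subgroup)
  have Asub: "A \<subseteq> carrier G" using sgA by (rule subgroup.subset)
  define g where "g = (\<lambda>C. phi (SOME a. a \<in> A \<and> C = B #> a))"
  have "phi ` A \<subseteq> g ` R"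
  proof
    fix y assume "y \<in> phi ` A"
    then obtain a where a: "a \<in> A" "y = phi a" by blast
    have ac: "a \<in> carrier G" using a Asub by blast
    have CR: "B #> a \<in> R" unfolding R_def using a AH by blast
    have ex: "\<exists>a'. a' \<in> A \<and> B #> a = B #> a'" using a by blast
    define a' where "a' = (SOME a'. a' \<in> A \<and> B #> a = B #> a')"
    have a': "a' \<in> A" "B #> a = B #> a'" using someI_ex[OF ex] a'_def by auto
    have a'c: "a' \<in> carrier G" using a' Asub by blast
    define d where "d = a' \<otimes> inv a"
    have "a' \<in> B #> a" using a'(2) rcos_self[OF a'c B] by simp
    hence dB: "d \<in> B" unfolding d_def using subgroup.rcos_module_imp[OF B is_group ac] by simp
    have dc: "d \<in> carrier G" using d_def ac a'c by simp
    have db: "d \<otimes> b = b \<otimes> d" using Bc dB bB unfolding commset_def by blast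
    have "a' = d \<otimes> a" unfolding d_def using ac a'c by (simp add: m_assoc)
    hence "phi a' = phi a" unfolding phi_def using phi_shift[OF dc bc ac db] by simp
    moreover have "g (B #> a) = phi a'" unfolding g_def a'_def by simp
    ultimately show "y \<in> g ` R" using CR a by (metis image_eqI)
  qed
  hence "card (phi ` A) \<le> card (g ` R)" using finR by (intro card_mono) auto
  also have "\<dots> \<le> n" unfolding n_def using card_image_le[OF finR] .
  finally have Ms: "card ((\<lambda>a. inv a \<otimes> (inv b \<otimes> a \<otimes> b)) ` A) \<le> n" unfolding phi_def .
  obtain J where J: "1 \<le> J" "J \<le> n" "\<forall>a\<in>A. commutes (b [^] J) a"
    using cent_bound[OF fin pr ordG An Ac bc Ms] by blast
  have "b [^] J \<in> A" using maxA[of "b [^] J"] J bc by simp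
  hence "x [^] (k * J) \<in> A" unfolding b_def using xc by (simp add: nat_pow_pow)
  moreover have "k * J \<le> n ^ 2" using k J mult_le_mono by (simp add: power2_eq_square)
  moreover have "1 \<le> k * J" using k J by simp
  ultimately show ?thesis unfolding idx n_def by blast
qed


lemma r_coset_restrict: "A #>\<^bsub>G\<lparr>carrier := H\<rparr>\<^esub> a = A #> a"
  by (simp add: r_coset_def)

lemma set_mult_restrict: "U <#>\<^bsub>G\<lparr>carrier := H\<rparr>\<^esub> V = U <#> V"
  by (simp add: set_mult_def)

lemma abc:
  assumes fin: "finite (carrier G)" and An: "A \<lhd> G" and Ac: "commset A" and x: "x \<in> carrier G"
  shows "abelian_by_cyclic G (Tset A x)"
proof -
  define H where "H = Tset A x"
  have H: "subgroup H G" unfolding H_def using T_subgroup[OF fin An x] .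
  have sgA: "subgroup A G" using An by (rule normal_imp_subgroup)
  have Asub: "A \<subseteq> carrier G" using sgA by (rule subgroup.subset)
  have AH: "A \<subseteq> H" and xH: "x \<in> H" unfolding H_def using T_contains[OF sgA x] by auto
  have AN: "A \<lhd> G\<lparr>carrier := H\<rparr>" using normal_restrict_supergroup[OF H An AH] .
  have ab: "abelian_subset G A" using abel_iff[OF sgA] Ac by simp
  define Q where "Q = G\<lparr>carrier := H\<rparr> Mod A"
  have gQ: "group Q" unfolding Q_def using normal.factorgroup_is_group[OF AN] .
  define Xc where "Xc = A #> x"
  have cQ: "carrier Q = (\<lambda>h. A #> h) ` H"
    unfolding Q_def FactGroup_def by (simp add: rcosets_restrict)
  have XQ: "Xc \<in> carrier Q" unfolding cQ Xc_def using xH by blast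
  have powX: "Xc [^]\<^bsub>Q\<^esub> (i::nat) = A #> x [^] i" for i
  proof (induction i)
    case 0
    show ?case unfolding Q_def FactGroup_def using Asub by simp
  next
    case (Suc i)
    have xi: "x [^] i \<in> H" using subgroup_pow_closed[OF H xH] .
    have "Xc [^]\<^bsub>Q\<^esub> Suc i = (A #> x [^] i) <#> (A #> x)"
      using Suc unfolding Q_def Xc_def FactGroup_def by (simp add: set_mult_restrict)
    also have "\<dots> = A #> (x [^] i \<otimes> x)"
      using normal.rcos_sum[OF AN, of "x [^] i" x] xi xH
      by (simp add: r_coset_restrict set_mult_restrict)
    finally show ?case by simp
  qed
  have "carrier Q = range (\<lambda>n::int. Xc [^]\<^bsub>Q\<^esub> n)"
  proof
    show "carrier Q \<subseteq> range (\<lambda>n::int. Xc [^]\<^bsub>Q\<^esub> n)"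
    proof
      fix C assume "C \<in> carrier Q"
      then obtain h where h: "h \<in> H" "C = A #> h" unfolding cQ by blast
      then obtain a i where ai: "a \<in> A" "h = a \<otimes> x [^] (i::nat)" unfolding H_def by (metis TsetE)
      have ac: "a \<in> carrier G" using ai Asub by blast
      have "C = (A #> a) #> x [^] i" using h ai coset_mult_assoc[OF Asub ac, of "x [^] i"] x by simp
      also have "A #> a = A" using subgroup.rcos_const[OF sgA is_group ai(1)] .
      also have "A #> x [^] i = Xc [^]\<^bsub>Q\<^esub> (int i)" using powX by (simp add: int_pow_int)
      finally show "C \<in> range (\<lambda>n::int. Xc [^]\<^bsub>Q\<^esub> n)" by blast
    qed
    show "range (\<lambda>n::int. Xc [^]\<^bsub>Q\<^esub> n) \<subseteq> carrier Q"
      using group.int_pow_closed[OF gQ XQ] by blast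
  qed
  hence "cyclic_group Q" using group.cyclic_group[OF gQ] XQ by blast
  then show ?thesis unfolding abelian_by_cyclic_def H_def[symmetric] Q_def using AN ab by blast
qed


lemma count_gen:
  assumes fin: "finite (carrier G)" and sgA: "subgroup A G" and der: "derived G (carrier G) \<subseteq> A"
    and finS: "finite S" and Ssub: "S \<subseteq> carrier G"
    and mf: "\<And>s. s \<in> S \<Longrightarrow> 1 \<le> mf s \<and> s [^] (mf s :: nat) \<in> A"
  shows "\<exists>K. subgroup K G \<and> A \<subseteq> K \<and> S \<subseteq> K \<and> card K \<le> (\<Prod>s\<in>S. mf s) * card A"
  using finS Ssub mf
proof (induction S rule: finite_induct)
  case empty
  then show ?case using sgA by auto
next
  case (insert s S)
  obtain K where K: "subgroup K G" "A \<subseteq> K" "S \<subseteq> K" "card K \<le> (\<Prod>s\<in>S. mf s) * card A"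
    using insert by auto
  have sc: "s \<in> carrier G" using insert by auto
  have ms: "1 \<le> mf s" "s [^] mf s \<in> A" using insert.prems(2)[of s] by auto
  have KN: "K \<lhd> G" using normal_der[OF K(1)] der K(2) by blast
  define K' where "K' = Tset K s"
  have K'sg: "subgroup K' G" unfolding K'_def using T_subgroup[OF fin KN sc] .
  have KK': "K \<subseteq> K'" "s \<in> K'" unfolding K'_def using T_contains[OF K(1) sc] by auto
  have Ksub: "K \<subseteq> carrier G" using K(1) by (rule subgroup.subset)
  have finK: "finite K" using fin Ksub finite_subset by blast
  have "K' \<subseteq> (\<lambda>(k, i). k \<otimes> s [^] i) ` (K \<times> {..<mf s})"
  proof
    fix y assume "y \<in> K'"
    then obtain k n where kn: "k \<in> K" "y = k \<otimes> s [^] (n::nat)" unfolding K'_def by (metis TsetE)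
    have kc: "k \<in> carrier G" using kn Ksub by blast
    define q where "q = n div mf s"
    define r where "r = n mod mf s"
    have n: "n = mf s * q + r" unfolding q_def r_def by simp
    have "s [^] n = (s [^] mf s) [^] q \<otimes> s [^] r" unfolding n using sc
      by (simp add: nat_pow_mult nat_pow_pow)
    hence y: "y = (k \<otimes> (s [^] mf s) [^] q) \<otimes> s [^] r" using kn kc sc by (simp add: m_assoc)
    have "(s [^] mf s) [^] q \<in> K" using subgroup_pow_closed[OF sgA ms(2)] K(2) by blast
    hence "k \<otimes> (s [^] mf s) [^] q \<in> K" using subgroup.m_closed[OF K(1) kn(1)] by blast
    moreover have "r < mf s" unfolding r_def using ms(1) by simp
    ultimately show "y \<in> (\<lambda>(k, i). k \<otimes> s [^] i) ` (K \<times> {..<mf s})" using y by force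
  qed
  hence "card K' \<le> card ((\<lambda>(k, i). k \<otimes> s [^] i) ` (K \<times> {..<mf s}))"
    using finK by (intro card_mono) auto
  also have "\<dots> \<le> card (K \<times> {..<mf s})" using finK by (intro card_image_le) auto
  also have "\<dots> = card K * mf s" by (simp add: card_cartesian_product)
  also have "\<dots> \<le> (\<Prod>s\<in>S. mf s) * card A * mf s" using K(4) by simp
  also have "\<dots> = (\<Prod>s\<in>insert s S. mf s) * card A" using insert.hyps by simp
  finally show ?case using K'sg K(2,3) KK' by blast
qed


lemma main_loc:
  fixes p r :: nat and t :: real
  assumes "p_group G p"
    and "metabelian G"
    and "group_rank G = r"
    and "t \<ge> 1"
    and hyp: "\<And>H. subgroup H G \<Longrightarrow> abelian_by_cyclic G H \<Longrightarrow>
           \<exists>A. subgroup A G \<and> A \<subseteq> H \<and> abelian_subset G A \<and> real (sub_index G H A) \<le> t"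
  shows "\<exists>N. N \<lhd> G \<and> abelian_subset G N \<and> real (sub_index G (carrier G) N) \<le> t ^ (2 * r)"
proof -
  from assms(1) obtain e where pr: "Factorial_Ring.prime p" and fin: "finite (carrier G)"
    and ordG: "order G = p ^ e" unfolding p_group_def by blast
  define der where "der = derived G (carrier G)"
  have sgder: "subgroup der G" unfolding der_def using derived_is_subgroup by simp
  have cder: "commset der" using assms(2) abel_iff[OF sgder] unfolding metabelian_def der_def by simp
  define SS where "SS = {A. subgroup A G \<and> der \<subseteq> A \<and> commset A}"
  have finSS: "finite SS"
  proof (rule finite_subset)
    show "SS \<subseteq> Pow (carrier G)" unfolding SS_def using subgroup.subset by blast
    show "finite (Pow (carrier G))" using fin by simp
  qed
  have derSS: "der \<in> SS" unfolding SS_def using sgder cder by simp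
  define c where "c = Max (card ` SS)"
  have "c \<in> card ` SS" unfolding c_def using finSS derSS by (intro Max_in) auto
  then obtain A where ASS: "A \<in> SS" and cA: "card A = c" by blast
  have Amax: "\<And>B. B \<in> SS \<Longrightarrow> card B \<le> card A" unfolding cA c_def using finSS by simp
  have sgA: "subgroup A G" and derA: "der \<subseteq> A" and Ac: "commset A" using ASS unfolding SS_def by auto
  have Asub: "A \<subseteq> carrier G" using sgA by (rule subgroup.subset)
  have An: "A \<lhd> G" using normal_der[OF sgA] derA der_def by simp
  have maxA: "y \<in> A" if y: "y \<in> carrier G" and cy: "\<forall>a\<in>A. commutes y a" for y
  proof -
    define T where "T = Tset A y"
    have sgT: "subgroup T G" unfolding T_def using T_subgroup[OF fin An y] .
    have AT: "A \<subseteq> T" and yT: "y \<in> T" unfolding T_def using T_contains[OF sgA y] by auto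
    have cT: "commset T" unfolding T_def using T_comm[OF Asub Ac y] cy unfolding commutes_def by blast
    have "T \<in> SS" unfolding SS_def using sgT AT derA cT by auto
    hence "card T \<le> card A" by (rule Amax)
    moreover have "finite T" using fin sgT subgroup.subset finite_subset by blast
    ultimately have "A = T" using AT card_subset_eq by (metis antisym card_mono)
    thus ?thesis using yT by simp
  qed
  have mb: "\<exists>m. 1 \<le> m \<and> real m \<le> t ^ 2 \<and> x [^] m \<in> A" if x: "x \<in> carrier G" for x
  proof -
    define H where "H = Tset A x"
    have sgH: "subgroup H G" unfolding H_def using T_subgroup[OF fin An x] .
    have AH: "A \<subseteq> H" and xH: "x \<in> H" unfolding H_def using T_contains[OF sgA x] by auto
    have "abelian_by_cyclic G H" unfolding H_def using abc[OF fin An Ac x] .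
    then obtain B where B: "subgroup B G" "B \<subseteq> H" "abelian_subset G B" "real (sub_index G H B) \<le> t"
      using hyp[OF sgH] by blast
    have Bc: "commset B" using abel_iff[OF B(1)] B(3) by simp
    obtain m where m: "1 \<le> m" "m \<le> (sub_index G H B) ^ 2" "x [^] m \<in> A"
      using local_bound[OF fin pr ordG An Ac _ sgH AH xH B(1) B(2) Bc] maxA by blast
    have "real m \<le> real (sub_index G H B) ^ 2" using m(2) by (metis of_nat_le_iff of_nat_power)
    also have "\<dots> \<le> t ^ 2" using B(4) by (intro power_mono) auto
    finally show ?thesis using m by blast
  qed
  then obtain mf where mf: "\<And>x. x \<in> carrier G \<Longrightarrow> 1 \<le> mf x \<and> real (mf x) \<le> t ^ 2 \<and> x [^] (mf x :: nat) \<in> A"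
    by metis
  define Qr where "Qr = (\<lambda>r. \<forall>H. subgroup H G \<longrightarrow>
      (\<exists>S. S \<subseteq> H \<and> finite S \<and> card S \<le> r \<and> generate G S = H))"
  have "Qr (card (carrier G))" unfolding Qr_def
  proof (intro allI impI)
    fix H assume H: "subgroup H G"
    have Hs: "H \<subseteq> carrier G" using H by (rule subgroup.subset)
    have "generate G H = H"
      using generate_subgroup_incl[OF subset_refl H] generate.incl[of _ H G] by blast
    moreover have "finite H" using fin Hs finite_subset by blast
    moreover have "card H \<le> card (carrier G)" using fin Hs by (intro card_mono)
    ultimately show "\<exists>S. S \<subseteq> H \<and> finite S \<and> card S \<le> card (carrier G) \<and> generate G S = H" by blast
  qed
  hence "Qr (group_rank G)" unfolding group_rank_def Qr_def by (rule LeastI)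
  then obtain S where S: "S \<subseteq> carrier G" "finite S" "card S \<le> r" "generate G S = carrier G"
    unfolding Qr_def using subgroup_self assms(3) by blast
  obtain K where K: "subgroup K G" "A \<subseteq> K" "S \<subseteq> K" "card K \<le> (\<Prod>s\<in>S. mf s) * card A"
    using count_gen[OF fin sgA _ S(2) S(1), of mf] derA der_def mf S(1) by blast
  have GK: "carrier G \<subseteq> K" using generate_subgroup_incl[OF K(3) K(1)] S(4) by simp
  have finK: "finite K" using finite_subset[OF subgroup.subset[OF K(1)] fin] .
  have "card (carrier G) \<le> card K" using card_mono[OF finK GK] .
  hence le1: "card (carrier G) \<le> (\<Prod>s\<in>S. mf s) * card A" using K(4) by linarith
  have lag: "card (rcosets A) * card A = card (carrier G)" using lagrange[OF sgA] unfolding order_def .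
  have finA: "finite A" using finite_subset[OF Asub fin] .
  have "A \<noteq> {}" using subgroup.one_closed[OF sgA] by blast
  hence cApos: "0 < card A" using finA by (simp add: card_gt_0_iff)
  have "card (rcosets A) * card A \<le> (\<Prod>s\<in>S. mf s) * card A" using le1 lag by simp
  hence idxle: "card (rcosets A) \<le> (\<Prod>s\<in>S. mf s)" using cApos by simp
  have rc: "rcosets A = (\<lambda>a. A #> a) ` carrier G" unfolding RCOSETS_def by auto
  have si: "sub_index G (carrier G) A = card (rcosets A)"
    unfolding sub_index_def rcosets_restrict rc ..
  have "real (sub_index G (carrier G) A) \<le> real (\<Prod>s\<in>S. mf s)" unfolding si using idxle by (simp only: of_nat_le_iff)
  also have "\<dots> = (\<Prod>s\<in>S. real (mf s))" by simp
  also have "\<dots> \<le> (\<Prod>s\<in>S. t ^ 2)" using mf S(1) by (intro prod_mono) auto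
  also have "\<dots> = (t ^ 2) ^ card S" by simp
  also have "\<dots> \<le> (t ^ 2) ^ r" using S(3) assms(4) by (intro power_increasing) (auto simp: one_le_power)
  also have "\<dots> = t ^ (2 * r)" by (simp add: power_mult)
  finally show ?thesis using An Ac abel_iff[OF sgA] by blast
qed


end

theorem lemma3p17:
  fixes P :: "('a, 'b) monoid_scheme" and p r :: nat and t :: real
  assumes "group P"
    and "p_group P p"
    and "metabelian P"
    and "group_rank P = r"
    and "t \<ge> 1"
    and "\<And>H. subgroup H P \<Longrightarrow> abelian_by_cyclic P H \<Longrightarrow>
           \<exists>A. subgroup A P \<and> A \<subseteq> H \<and> abelian_subset P A \<and> real (sub_index P H A) \<le> t"
  shows "\<exists>N. N \<lhd> P \<and> abelian_subset P N \<and> real (sub_index P (carrier P) N) \<le> t ^ (2 * r)"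
  using group.main_loc[OF assms(1) assms(2) assms(3) assms(4) assms(5) assms(6)] by blast

end
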